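(* A metrizable abelian topological group $G$ is NSS if and only if every absolutely Cauchy summable subset of $G$ is finite.
   Context: A topological group is NSS if it has a neighbourhood of the identity containing no non-trivial subgroup. A subset $A\subseteq G$ is absolutely Cauchy summable if for every neighbourhood $U$ of $0$ there is a finite $F\subseteq A$ such that the subgroup generated by $A\setminus F$ is contained in $U$. *)

theory Defs
  imports "HOL-Analysis.Analysis"
begin

definition is_add_subgroup :: "'a::group_add set \<Rightarrow> bool" where
  "is_add_subgroup H \<longleftrightarrow> 0 \<in> H \<and> (\<forall>x\<in>H. \<forall>y\<in>H. x + y \<in> H) \<and> (\<forall>x\<in>H. - x \<in> H)"

definition subgroup_generated :: "'a::group_add set \<Rightarrow> 'a set" where
  "subgroup_generated A = \<Inter>{H. is_add_subgroup H \<and> A \<subseteq> H}"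

definition nbhd0 :: "'a::{topological_space,zero} set \<Rightarrow> bool" where
  "nbhd0 U \<longleftrightarrow> (\<exists>V. open V \<and> 0 \<in> V \<and> V \<subseteq> U)"

definition NSS :: "'a::topological_group_add itself \<Rightarrow> bool" where
  "NSS _ \<longleftrightarrow> (\<exists>U::'a set. nbhd0 U \<and> (\<forall>H. is_add_subgroup H \<and> H \<subseteq> U \<longrightarrow> H = {0}))"

definition abs_cauchy_summable :: "'a::topological_group_add set \<Rightarrow> bool" where
  "abs_cauchy_summable A \<longleftrightarrow>
     (\<forall>U. nbhd0 U \<longrightarrow> (\<exists>F. finite F \<and> F \<subseteq> A \<and> subgroup_generated (A - F) \<subseteq> U))"

end

theory Submission
  imports Defs
begin

lemma sg_gen_is: "is_add_subgroup (subgroup_generated (A::'a::group_add set))"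
  unfolding is_add_subgroup_def subgroup_generated_def by auto

lemma sg_gen_sup: "A \<subseteq> subgroup_generated A"
  unfolding subgroup_generated_def by auto

lemma sg_gen_sub: "is_add_subgroup H \<Longrightarrow> A \<subseteq> H \<Longrightarrow> subgroup_generated A \<subseteq> H"
  unfolding subgroup_generated_def by auto

lemma doubling:
  fixes V :: "'a::topological_monoid_add set"
  assumes "open V" "0 \<in> V"
  shows "\<exists>W. open W \<and> 0 \<in> W \<and> (\<forall>a\<in>W. \<forall>b\<in>W. a + b \<in> V)"
proof -
  have f1: "filterlim fst (nhds (0::'a)) (nhds 0 \<times>\<^sub>F nhds 0)"
    unfolding filterlim_def by (rule filtermap_fst_prod_filter)
  have f2: "filterlim snd (nhds (0::'a)) (nhds 0 \<times>\<^sub>F nhds 0)"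
    unfolding filterlim_def by (rule filtermap_snd_prod_filter)
  have "((\<lambda>p. fst p + snd p) \<longlongrightarrow> 0 + 0) (nhds (0::'a) \<times>\<^sub>F nhds 0)"
    by (rule tendsto_add[OF f1 f2])
  moreover have z: "(0::'a) + 0 \<in> V" using assms(2) by simp
  ultimately have "eventually (\<lambda>p. fst p + snd p \<in> V) (nhds (0::'a) \<times>\<^sub>F nhds 0)"
    by (rule topological_tendstoD[OF _ assms(1)])
  then have "\<exists>Q. eventually Q (nhds (0::'a)) \<and> (\<forall>x y. Q x \<longrightarrow> Q y \<longrightarrow> fst (x,y) + snd (x,y) \<in> V)"
    by (rule eventually_prod_same[THEN iffD1])
  then obtain Q where Q: "eventually Q (nhds 0)" "\<And>x y. Q x \<Longrightarrow> Q y \<Longrightarrow> x + y \<in> V"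
    by (metis fst_conv snd_conv)
  obtain W where W: "open W" "0 \<in> W" "\<forall>x\<in>W. Q x"
    using Q(1) unfolding eventually_nhds by blast
  have "\<forall>a\<in>W. \<forall>b\<in>W. a + b \<in> V" using W(3) Q(2) by simp
  then show ?thesis using W(1,2) by blast
qed

lemma sum_in:
  fixes V :: "nat \<Rightarrow> 'a::comm_monoid_add set"
  assumes "\<And>n a b. a \<in> V (Suc n) \<Longrightarrow> b \<in> V (Suc n) \<Longrightarrow> a + b \<in> V n"
    and "\<And>n. 0 \<in> V n" and "\<And>m. y m \<in> V (Suc m)"
  shows "(\<Sum>m\<in>{N..<N+k}. y m) \<in> V N"
proof (induction k arbitrary: N)
  case 0
  then show ?case using assms(2) by simp
next
  case (Suc k)
  have "(\<Sum>m\<in>{N..<N+Suc k}. y m) = y N + (\<Sum>m\<in>{Suc N..<Suc N+k}. y m)"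
    by (subst sum.atLeast_Suc_lessThan) auto
  then show ?case using assms(1)[OF assms(3) Suc[of "Suc N"]] by simp
qed

theorem theorem8p1:
  assumes "metrizable_space (euclidean :: 'a::topological_ab_group_add topology)"
  shows "NSS TYPE('a) \<longleftrightarrow> (\<forall>A::'a set. abs_cauchy_summable A \<longrightarrow> finite A)"
proof
  assume "NSS TYPE('a)"
  then obtain U :: "'a set" where U: "nbhd0 U" "\<And>H. is_add_subgroup H \<Longrightarrow> H \<subseteq> U \<Longrightarrow> H = {0}"
    unfolding NSS_def by blast
  show "\<forall>A::'a set. abs_cauchy_summable A \<longrightarrow> finite A"
  proof (intro allI impI)
    fix A :: "'a set" assume "abs_cauchy_summable A"
    then obtain F where F: "finite F" "F \<subseteq> A" "subgroup_generated (A - F) \<subseteq> U"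
      using U(1) \<open>abs_cauchy_summable A\<close> unfolding abs_cauchy_summable_def by auto
    have "subgroup_generated (A - F) = {0}" by (rule U(2)[OF sg_gen_is F(3)])
    then have "A - F \<subseteq> {0}" using sg_gen_sup[of "A - F"] by simp
    then have "A \<subseteq> insert 0 F" by auto
    then show "finite A" using F(1) by (metis finite_insert finite_subset)
  qed
next
  assume fin: "\<forall>A::'a set. abs_cauchy_summable A \<longrightarrow> finite A"
  show "NSS TYPE('a)"
  proof (rule ccontr)
    assume nn: "\<not> NSS TYPE('a)"
    have nt: "\<exists>H. is_add_subgroup H \<and> H \<subseteq> U \<and> H \<noteq> {0}" if "open U" "0 \<in> U" for U :: "'a set"
    proof -
      have "nbhd0 U" using that unfolding nbhd0_def by auto
      then show ?thesis using nn unfolding NSS_def by auto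
    qed
    obtain \<B> :: "'a set set" where B: "countable \<B>" "\<And>V. V \<in> \<B> \<Longrightarrow> open V"
      "\<And>U. open U \<Longrightarrow> 0 \<in> U \<Longrightarrow> \<exists>V\<in>\<B>. 0 \<in> V \<and> V \<subseteq> U"
    proof -
      have "first_countable (euclidean::'a topology)" by (rule metrizable_imp_first_countable[OF assms])
      then have "\<exists>\<B>. countable \<B> \<and> (\<forall>V\<in>\<B>. openin euclidean V) \<and>
         (\<forall>U. openin euclidean U \<and> (0::'a) \<in> U \<longrightarrow> (\<exists>V\<in>\<B>. 0 \<in> V \<and> V \<subseteq> U))"
        unfolding first_countable_def by simp
      then show ?thesis using that by auto
    qed
    define \<B>' where "\<B>' = {V\<in>\<B>. 0 \<in> V}"
    have B': "countable \<B>'" "\<And>V. V \<in> \<B>' \<Longrightarrow> open V \<and> 0 \<in> V"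
      "\<And>U. open U \<Longrightarrow> 0 \<in> U \<Longrightarrow> \<exists>V\<in>\<B>'. V \<subseteq> U"
    proof -
      show "countable \<B>'" unfolding \<B>'_def using B(1) by simp
      show "\<And>V. V \<in> \<B>' \<Longrightarrow> open V \<and> 0 \<in> V" unfolding \<B>'_def using B(2) by simp
      fix U :: "'a set" assume "open U" "0 \<in> U"
      then obtain V where "V \<in> \<B>" "0 \<in> V" "V \<subseteq> U" using B(3) by blast
      then show "\<exists>V\<in>\<B>'. V \<subseteq> U" unfolding \<B>'_def by blast
    qed
    have ne: "\<B>' \<noteq> {}" using B'(3)[of UNIV] by auto
    define b where "b = from_nat_into \<B>'"
    have bo: "open (b n) \<and> 0 \<in> b n" for n using B'(2) from_nat_into[OF ne] b_def by auto
    have bb: "\<exists>n. b n \<subseteq> U" if "open U" "0 \<in> U" for U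
      using B'(3)[OF that] from_nat_into_surj[OF B'(1)] b_def by metis
    define f :: "'a set \<Rightarrow> 'a set" where
      "f U = (SOME W. open W \<and> 0 \<in> W \<and> (\<forall>a\<in>W. \<forall>c\<in>W. a + c \<in> U))" for U
    have fP: "open (f U) \<and> 0 \<in> f U \<and> (\<forall>a\<in>f U. \<forall>c\<in>f U. a + c \<in> U)" if "open U" "0 \<in> U" for U
      unfolding f_def using someI_ex[OF doubling[OF that]] .
    define V where "V = rec_nat UNIV (\<lambda>n W. f (W \<inter> b n))"
    have V0: "V 0 = UNIV" and VS: "V (Suc n) = f (V n \<inter> b n)" for n by (simp_all add: V_def)
    have Vo: "open (V n) \<and> 0 \<in> V n" for n
    proof (induction n)
      case 0 then show ?case by (simp add: V0)
    next
      case (Suc n) then show ?case using fP[of "V n \<inter> b n"] bo[of n] by (auto simp: VS)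
    qed
    have Vadd: "a + c \<in> V n \<and> a + c \<in> b n" if "a \<in> V (Suc n)" "c \<in> V (Suc n)" for n a c
      using fP[of "V n \<inter> b n"] bo[of n] Vo[of n] that by (auto simp: VS)
    have Vdec: "V (Suc n) \<subseteq> V n \<and> V (Suc n) \<subseteq> b n" for n
      using Vadd[of _ n 0] Vo[of "Suc n"] by auto
    have Vmono: "V m \<subseteq> V n" if "n \<le> m" for m n
      using that
    proof (induction m)
      case 0 then show ?case by simp
    next
      case (Suc m) then show ?case using Vdec[of m] by (cases "n = Suc m") auto
    qed
    have Vbase: "\<exists>n. V n \<subseteq> U" if "open U" "0 \<in> U" for U
      using bb[OF that] Vdec by blast
    have "\<exists>K. is_add_subgroup K \<and> K \<subseteq> V (Suc n) \<and> K \<noteq> {0}" for n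
      using nt[OF conjunct1[OF Vo] conjunct2[OF Vo]] by blast
    then obtain H where H: "\<And>n. is_add_subgroup (H n) \<and> H n \<subseteq> V (Suc n) \<and> H n \<noteq> {0}"
      by metis
    have "\<exists>x. x \<in> H n \<and> x \<noteq> 0" for n
      using H[of n] unfolding is_add_subgroup_def by blast
    then obtain x where x: "\<And>n. x n \<in> H n \<and> x n \<noteq> 0" by metis
    define A where "A = range x"
    have "abs_cauchy_summable A"
      unfolding abs_cauchy_summable_def
    proof (intro allI impI)
      fix U :: "'a set" assume "nbhd0 U"
      then obtain P1 where P1: "open P1" "0 \<in> P1" "P1 \<subseteq> U" unfolding nbhd0_def by blast
      obtain N where N: "V N \<subseteq> P1" using Vbase[OF P1(1,2)] by blast
      define T where "T = {z. \<exists>M y. (\<forall>n. y n \<in> H n) \<and> z = (\<Sum>m\<in>{N..<N+M}. y m)}"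
      have ysub: "(\<forall>n. y n \<in> H n) \<Longrightarrow> y n \<in> V (Suc n)" for y n using H[of n] by blast
      have TV: "T \<subseteq> V N"
      proof
        fix z assume "z \<in> T"
        then obtain M y where y: "\<forall>n. y n \<in> H n" "z = (\<Sum>m\<in>{N..<N+M}. y m)" unfolding T_def by blast
        show "z \<in> V N" unfolding y(2)
          by (rule sum_in[where V=V]) (use Vadd Vo ysub[OF y(1)] in auto)
      qed
      have Hz: "0 \<in> H n" "\<And>a c. a \<in> H n \<Longrightarrow> c \<in> H n \<Longrightarrow> a + c \<in> H n" "\<And>a. a \<in> H n \<Longrightarrow> - a \<in> H n" for n
        using H[of n] unfolding is_add_subgroup_def by auto
      have ext: "(\<Sum>m\<in>{N..<N+M}. y m) = (\<Sum>m\<in>{N..<N+K}. (if m < N + M then y m else 0))"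
        if "M \<le> K" for M K and y :: "nat \<Rightarrow> 'a"
      proof -
        have "(\<Sum>m\<in>{N..<N+K}. (if m < N + M then y m else 0)) = (\<Sum>m\<in>{N..<N+M}. (if m < N + M then y m else 0))"
          using that by (intro sum.mono_neutral_right) auto
        then show ?thesis by simp
      qed
      have Tsg: "is_add_subgroup T"
        unfolding is_add_subgroup_def
      proof (intro conjI ballI)
        show "0 \<in> T" unfolding T_def using Hz(1) by (intro CollectI exI[of _ 0] exI[of _ "\<lambda>_. 0"]) auto
      next
        fix a c assume "a \<in> T" "c \<in> T"
        then obtain M y M' y' where y: "\<forall>n. y n \<in> H n" "a = (\<Sum>m\<in>{N..<N+M}. y m)"
          and y': "\<forall>n. y' n \<in> H n" "c = (\<Sum>m\<in>{N..<N+M'}. y' m)" unfolding T_def by blast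
        let ?K = "max M M'"
        let ?z = "\<lambda>m. (if m < N + M then y m else 0) + (if m < N + M' then y' m else 0)"
        have "a + c = (\<Sum>m\<in>{N..<N+?K}. ?z m)"
          unfolding y(2) y'(2) sum.distrib by (simp add: ext[of M ?K] ext[of M' ?K])
        moreover have "\<forall>n. ?z n \<in> H n" using y(1) y'(1) Hz by auto
        ultimately show "a + c \<in> T" unfolding T_def by (intro CollectI exI[of _ ?K] exI[of _ ?z]) simp
      next
        fix a assume "a \<in> T"
        then obtain M y where y: "\<forall>n. y n \<in> H n" "a = (\<Sum>m\<in>{N..<N+M}. y m)" unfolding T_def by blast
        have "- a = (\<Sum>m\<in>{N..<N+M}. - y m)" by (simp add: y(2) sum_negf)
        moreover have "\<forall>n. - y n \<in> H n" using y(1) Hz by auto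
        ultimately show "- a \<in> T" unfolding T_def by (intro CollectI exI[of _ M] exI[of _ "\<lambda>m. - y m"]) simp
      qed
      have xT: "x n \<in> T" if "N \<le> n" for n
      proof -
        let ?y = "\<lambda>m. if m = n then x n else 0"
        have "(\<Sum>m\<in>{N..<N+(Suc n - N)}. ?y m) = x n" using that by (simp add: sum.delta)
        moreover have "\<forall>m. ?y m \<in> H m" using x Hz by auto
        ultimately show ?thesis unfolding T_def by (intro CollectI exI[of _ "Suc n - N"] exI[of _ ?y]) auto
      qed
      have "A - x ` {..<N} \<subseteq> T"
      proof
        fix z assume "z \<in> A - x ` {..<N}"
        then obtain n where "z = x n" "\<not> n < N" unfolding A_def by auto
        then show "z \<in> T" using xT[of n] by simp
      qed
      then have "subgroup_generated (A - x ` {..<N}) \<subseteq> U"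
        using sg_gen_sub[OF Tsg] TV N P1(3) by blast
      then show "\<exists>F. finite F \<and> F \<subseteq> A \<and> subgroup_generated (A - F) \<subseteq> U"
        by (intro exI[of _ "x ` {..<N}"]) (auto simp: A_def)
    qed
    then have "finite A" using fin by blast
    then obtain n0 where n0: "infinite {n \<in> UNIV. x n = x n0}"
      unfolding A_def using pigeonhole_infinite[of "UNIV::nat set" x] by blast
    define a where "a = x n0"
    have a: "infinite {n. x n = a}" using n0 unfolding a_def by simp
    have a0: "a \<noteq> 0" using x unfolding a_def by blast
    have "\<exists>P1 P2. openin euclidean P1 \<and> openin euclidean P2 \<and> 0 \<in> P1 \<and> a \<in> P2 \<and> disjnt P1 P2"
    proof -
      have "Hausdorff_space (euclidean::'a topology)" by (rule metrizable_imp_Hausdorff_space[OF assms])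
      then have hs: "\<forall>x y::'a. x \<noteq> y \<longrightarrow> (\<exists>U V. openin euclidean U \<and> openin euclidean V \<and> x \<in> U \<and> y \<in> V \<and> disjnt U V)"
        unfolding Hausdorff_space_def by simp
      have "(0::'a) \<noteq> a" using a0 by simp
      then show ?thesis using hs[rule_format, of 0 a] by simp
    qed
    then obtain P1 P2 where OO: "open P1" "open P2" "0 \<in> P1" "a \<in> P2" "disjnt P1 P2"
      by auto
    obtain N where N: "V N \<subseteq> P1" using Vbase[OF OO(1,3)] by blast
    obtain m where m: "m \<ge> N" "x m = a"
      using a unfolding infinite_nat_iff_unbounded_le by blast
    have "a \<in> V N" using m x[of m] H[of m] Vmono[of N "Suc m"] by auto
    then show False using N OO by (auto simp: disjnt_def)
  qed
qed

end
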